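(* Let $d=1$ and, for probability measures $\mu$ on $\mathbb R$ with $\int|y|\,\mu(dy)<\infty$, let $$a(x,\mu)=x^2\Big(\int_{\mathbb R}|y|\,\mu(dy)\Big)^3,\qquad b(x,\mu)=-2x^3\int_{\mathbb R}|y|\,\mu(dy),\qquad L_\mu u=a(x,\mu)u''+b(x,\mu)u'.$$ (a) With $m=0$, $V(x)=x^2/2$ and $H\equiv0$, all assumptions of Corollary 2.3 hold: conditions (H1.1), (H1.2), (H1.3) and (H2) are satisfied, $|a(0,\mu)|+|b(0,\mu)|\le C_1+C_2\int H\,d\mu$ for any $C_1,C_2>0$, and there exist $C,\Lambda>0$ (e.g. $C=3$, $\Lambda=2$) such that $\int_{\mathbb R}L_\mu V\,d\mu\le C-\Lambda\int_{\mathbb R}V\,d\mu$ for every compactly supported probability measure $\mu$ on $\mathbb R$. (b) There is no function $U\in C^2(\mathbb R)$ with $U\ge0$, $U(x)\to+\infty$ as $|x|\to\infty$, together with positive numbers $C,\Lambda$, such that $L_\mu U(x)\le C-\Lambda U(x)$ for all $x\in\mathbb R$ and all probability measures $\mu$ with $\int U\,d\mu<\infty$ and $\int |y|\,d\mu<\infty$.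
   Context: For a function $V\in C^2(\mathbb R^d)$, $V\ge0$, $V\to\infty$ at infinity: $\mathcal P_R(V)$ is the set of probability measures with $\int V\,d\mu\le R$; $\mathcal P(V)$ those with $V\in L^1(\mu)$; $\mu_n\to\mu$ $V$-weakly in $\mathcal P(V)$ means $\int f\,d\mu_n\to\int f\,d\mu$ for all continuous $f$ with $f/V\to0$ at infinity. With $m=0$ (no nondegenerate variables, $z=x$), the conditions read: (H1.1) vacuous; (H1.2) for every $R>0$ and every bounded interval $K$: $\sup_{x\in K,\mu\in\mathcal P_R(V)}(|a(x,\mu)|+|b(x,\mu)|)<\infty$; (H1.3) for every $R>0$ and every bounded interval $K$ there is a nonnegative continuous monotone $\omega_{K,R}$ on $[0,\infty)$ with $\omega_{K,R}(0)=0$ and $\sup_{\mu\in\mathcal P_R(V)}(|a(x,\mu)-a(x',\mu)|+|b(x,\mu)-b(x',\mu)|)\le\omega_{K,R}(|x-x'|)$ for $x,x'\in K$; (H2) for every $R>0$, if $\mu_n\in\mathcal P_R(V)$ converges $V$-weakly to $\mu\in\mathcal P_R(V)$ then $|a(x,\mu_n)-a(x,\mu)|+|b(x,\mu_n)-b(x,\mu)|\to0$ for every $x$. Corollary 2.3 (for reference) asserts existence of a probability solution of $(a(x,\mu)\mu)''-(b(x,\mu)\mu)'=0$ under (H1), (H2), the bound $|a(0,\mu)|+|b(0,\mu)|\le C_1+C_2\int H\,d\mu$ with continuous $H\ge0$, $H/V\to0$, and $\int L_\mu V\,d\mu\le C-\Lambda\int V\,d\mu$ for all compactly supported probability measures $\mu$.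 *)

theory Defs
  imports "HOL-Probability.Probability"
begin

definition prob_on_R :: "real measure \<Rightarrow> bool" where
  "prob_on_R M \<longleftrightarrow> prob_space M \<and> sets M = sets borel"

definition PV :: "(real \<Rightarrow> real) \<Rightarrow> real measure set" where
  "PV V = {M. prob_on_R M \<and> integrable M V}"

definition PRV :: "(real \<Rightarrow> real) \<Rightarrow> real \<Rightarrow> real measure set" where
  "PRV V R = {M. prob_on_R M \<and> integrable M V \<and> integral\<^sup>L M V \<le> R}"

definition C2 :: "(real \<Rightarrow> real) \<Rightarrow> bool" where
  "C2 f \<longleftrightarrow> (\<forall>x. f differentiable at x) \<and> (\<forall>x. deriv f differentiable at x)
     \<and> continuous_on UNIV (deriv (deriv f))"

definition bdd_interval :: "real set \<Rightarrow> bool" where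
  "bdd_interval K \<longleftrightarrow> is_interval K \<and> bounded K"

definition V_weak_conv :: "(real \<Rightarrow> real) \<Rightarrow> (nat \<Rightarrow> real measure) \<Rightarrow> real measure \<Rightarrow> bool" where
  "V_weak_conv V \<mu>s \<mu> \<longleftrightarrow>
     (\<forall>f. continuous_on UNIV f \<and> ((\<lambda>x. f x / V x) \<longlongrightarrow> 0) at_infinity \<longrightarrow>
        (\<lambda>n. integral\<^sup>L (\<mu>s n) f) \<longlonglongrightarrow> integral\<^sup>L \<mu> f)"

definition modulus :: "(real \<Rightarrow> real) \<Rightarrow> bool" where
  "modulus \<omega> \<longleftrightarrow> continuous_on {0..} \<omega> \<and> mono_on {0..} \<omega> \<and> (\<forall>t\<ge>0. \<omega> t \<ge> 0) \<and> \<omega> 0 = 0"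

definition H1_2 :: "(real \<Rightarrow> real measure \<Rightarrow> real) \<Rightarrow> (real \<Rightarrow> real measure \<Rightarrow> real)
    \<Rightarrow> (real \<Rightarrow> real) \<Rightarrow> bool" where
  "H1_2 a b V \<longleftrightarrow> (\<forall>R>0. \<forall>K. bdd_interval K \<longrightarrow>
     (\<exists>B. \<forall>x\<in>K. \<forall>\<mu>\<in>PRV V R. \<bar>a x \<mu>\<bar> + \<bar>b x \<mu>\<bar> \<le> B))"

definition H1_3 :: "(real \<Rightarrow> real measure \<Rightarrow> real) \<Rightarrow> (real \<Rightarrow> real measure \<Rightarrow> real)
    \<Rightarrow> (real \<Rightarrow> real) \<Rightarrow> bool" where
  "H1_3 a b V \<longleftrightarrow> (\<forall>R>0. \<forall>K. bdd_interval K \<longrightarrow>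
     (\<exists>\<omega>. modulus \<omega> \<and> (\<forall>x\<in>K. \<forall>x'\<in>K. \<forall>\<mu>\<in>PRV V R.
        \<bar>a x \<mu> - a x' \<mu>\<bar> + \<bar>b x \<mu> - b x' \<mu>\<bar> \<le> \<omega> \<bar>x - x'\<bar>)))"

definition H2 :: "(real \<Rightarrow> real measure \<Rightarrow> real) \<Rightarrow> (real \<Rightarrow> real measure \<Rightarrow> real)
    \<Rightarrow> (real \<Rightarrow> real) \<Rightarrow> bool" where
  "H2 a b V \<longleftrightarrow> (\<forall>R>0. \<forall>\<mu>s \<mu>. (\<forall>n. \<mu>s n \<in> PRV V R) \<and> \<mu> \<in> PRV V R \<and> V_weak_conv V \<mu>s \<mu> \<longrightarrow>
     (\<forall>x. (\<lambda>n. \<bar>a x (\<mu>s n) - a x \<mu>\<bar> + \<bar>b x (\<mu>s n) - b x \<mu>\<bar>) \<longlonglongrightarrow> 0))"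

definition Lop :: "(real \<Rightarrow> real measure \<Rightarrow> real) \<Rightarrow> (real \<Rightarrow> real measure \<Rightarrow> real)
    \<Rightarrow> real measure \<Rightarrow> (real \<Rightarrow> real) \<Rightarrow> real \<Rightarrow> real" where
  "Lop a b \<mu> u x = a x \<mu> * deriv (deriv u) x + b x \<mu> * deriv u x"

definition compact_supp :: "real measure \<Rightarrow> bool" where
  "compact_supp M \<longleftrightarrow> (\<exists>K. compact K \<and> K \<in> sets M \<and> emeasure M (UNIV - K) = 0)"

definition ex_a :: "real \<Rightarrow> real measure \<Rightarrow> real" where
  "ex_a x \<mu> = x\<^sup>2 * (\<integral>y. \<bar>y\<bar> \<partial>\<mu>) ^ 3"

definition ex_b :: "real \<Rightarrow> real measure \<Rightarrow> real" where
  "ex_b x \<mu> = - 2 * x ^ 3 * (\<integral>y. \<bar>y\<bar> \<partial>\<mu>)"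

end

theory Submission
  imports Defs
begin

lemma space_R: "prob_on_R M \<Longrightarrow> space M = UNIV"
  unfolding prob_on_R_def by (metis sets_eq_imp_space_eq space_borel)

lemma meas_R: "prob_on_R M \<Longrightarrow> continuous_on UNIV f \<Longrightarrow> (f::real\<Rightarrow>real) \<in> borel_measurable M"
  unfolding prob_on_R_def
  using borel_measurable_continuous_onI measurable_cong_sets by blast

lemma cs_bound:
  assumes "prob_on_R M" "compact_supp M"
  shows "\<exists>B. AE x in M. \<bar>x\<bar> \<le> B"
proof -
  obtain K where K: "compact K" "K \<in> sets M" "emeasure M (UNIV - K) = 0"
    using assms(2) unfolding compact_supp_def by blast
  obtain B where B: "\<forall>x\<in>K. norm x \<le> B" using compact_imp_bounded[OF K(1)] bounded_iff by blast
  have sp: "space M = UNIV" using space_R[OF assms(1)] .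
  have "UNIV - K \<in> null_sets M" using K sp
    by (metis null_setsI sets.compl_sets)
  then have "AE x in M. x \<in> K" by (rule AE_I') (auto simp: sp)
  then have "AE x in M. \<bar>x\<bar> \<le> B" by eventually_elim (use B in auto)
  then show ?thesis by blast
qed

lemma int_R:
  assumes "prob_on_R M" "AE x in M. \<bar>x\<bar> \<le> B" "continuous_on UNIV f"
  shows "integrable M (f::real\<Rightarrow>real)"
proof -
  interpret prob_space M using assms(1) unfolding prob_on_R_def by blast
  have "compact (f ` cball 0 B)"
    by (rule compact_continuous_image) (use assms(3) continuous_on_subset in auto)
  then obtain D where D: "\<forall>y\<in>f ` cball 0 B. norm y \<le> D" using compact_imp_bounded bounded_iff by blast
  have "AE x in M. norm (f x) \<le> D" using assms(2) by eventually_elim (use D in auto)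
  then show ?thesis by (rule integrable_const_bound) (rule meas_R[OF assms(1,3)])
qed

lemma dV: "deriv (\<lambda>x::real. x\<^sup>2 / 2) = (\<lambda>x. x)"
proof
  fix x :: real
  have "((\<lambda>x::real. x\<^sup>2 / 2) has_real_derivative x) (at x)"
    by (auto intro!: derivative_eq_intros)
  then show "deriv (\<lambda>x::real. x\<^sup>2 / 2) x = x" by (rule DERIV_imp_deriv)
qed

lemma ddV: "deriv (\<lambda>x::real. x) = (\<lambda>x. 1)"
  by (rule ext) (rule DERIV_imp_deriv, auto intro!: derivative_eq_intros)

lemma young: "m > 0 \<Longrightarrow> (y::real)\<^sup>2 \<le> 2/3 * (\<bar>y\<bar>/m) + 1/3 * (m\<^sup>2 * y^4)"
proof -
  assume m: "m > 0"
  define t where "t = m * \<bar>y\<bar>"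
  have t0: "t \<ge> 0" using m by (simp add: t_def)
  have "0 \<le> \<bar>y\<bar> * ((t - 1)\<^sup>2 * (t + 2))" using t0 by simp
  then have "3 * t * \<bar>y\<bar> \<le> 2 * \<bar>y\<bar> + t^3 * \<bar>y\<bar>" by (simp add: algebra_simps power2_eq_square power3_eq_cube)
  then have "3 * m * y\<^sup>2 \<le> 2 * \<bar>y\<bar> + m^3 * y^4"
    unfolding t_def by (simp add: algebra_simps power2_eq_square power3_eq_cube power4_eq_xxxx)
  then show ?thesis using m by (simp add: field_simps power2_eq_square power3_eq_cube power4_eq_xxxx)
qed

lemma var_ineq:
  fixes f :: "'a \<Rightarrow> real"
  assumes "prob_space M" "integrable M f" "integrable M (\<lambda>x. (f x)\<^sup>2)"
  shows "(integral\<^sup>L M f)\<^sup>2 \<le> integral\<^sup>L M (\<lambda>x. (f x)\<^sup>2)"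
proof -
  interpret prob_space M by fact
  define c where "c = integral\<^sup>L M f"
  have "0 \<le> integral\<^sup>L M (\<lambda>x. (f x - c)\<^sup>2)" by (rule Bochner_Integration.integral_nonneg_AE) simp
  also have "integral\<^sup>L M (\<lambda>x. (f x - c)\<^sup>2) = integral\<^sup>L M (\<lambda>x. (f x)\<^sup>2 - 2 * c * f x + c\<^sup>2)"
    by (simp add: power2_eq_square algebra_simps)
  also have "\<dots> = integral\<^sup>L M (\<lambda>x. (f x)\<^sup>2) - 2 * c * c + c\<^sup>2"
    using assms by (simp add: c_def prob_space)
  finally show ?thesis by (simp add: c_def power2_eq_square)
qed

lemma key:
  assumes P: "prob_on_R \<mu>" and CS: "compact_supp \<mu>"
  shows "(\<integral>x. Lop ex_a ex_b \<mu> (\<lambda>x::real. x\<^sup>2 / 2) x \<partial>\<mu>) \<le> 3 - 2 * integral\<^sup>L \<mu> (\<lambda>x::real. x\<^sup>2 / 2)"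
proof -
  interpret prob_space \<mu> using P unfolding prob_on_R_def by blast
  obtain B where B: "AE x in \<mu>. \<bar>x\<bar> \<le> B" using cs_bound[OF P CS] by blast
  have i1: "integrable \<mu> (\<lambda>x::real. \<bar>x\<bar>)" by (rule int_R[OF P B]) (intro continuous_intros)
  have i2: "integrable \<mu> (\<lambda>x::real. x\<^sup>2)" by (rule int_R[OF P B]) (intro continuous_intros)
  have i4: "integrable \<mu> (\<lambda>x::real. x^4)" by (rule int_R[OF P B]) (intro continuous_intros)
  define m where "m = (\<integral>y. \<bar>y\<bar> \<partial>\<mu>)"
  define s where "s = (\<integral>y. y\<^sup>2 \<partial>\<mu>)"
  define q where "q = (\<integral>y. y^4 \<partial>\<mu>)"
  have L: "Lop ex_a ex_b \<mu> (\<lambda>x::real. x\<^sup>2 / 2) = (\<lambda>x. m^3 * x\<^sup>2 - (2*m) * x^4)"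
    unfolding Lop_def ex_a_def ex_b_def dV ddV m_def
    by (rule ext) (simp add: algebra_simps power2_eq_square power4_eq_xxxx power3_eq_cube)
  have IL: "(\<integral>x. Lop ex_a ex_b \<mu> (\<lambda>x::real. x\<^sup>2 / 2) x \<partial>\<mu>) = m^3 * s - 2 * m * q"
    unfolding L s_def q_def using i2 i4 by simp
  have IV: "integral\<^sup>L \<mu> (\<lambda>x::real. x\<^sup>2 / 2) = s / 2" unfolding s_def by simp
  have m0: "m \<ge> 0" unfolding m_def by simp
  have q0: "q \<ge> 0" unfolding q_def by simp
  have ms: "m\<^sup>2 \<le> s" using var_ineq[of \<mu> "\<lambda>x. \<bar>x\<bar>"] i1 i2 prob_space_axioms unfolding m_def s_def by simp
  have e4: "(\<lambda>x::real. (x\<^sup>2)\<^sup>2) = (\<lambda>x. x^4)" by (rule ext) (simp add: power4_eq_xxxx power2_eq_square)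
  have sq: "s\<^sup>2 \<le> q" using var_ineq[of \<mu> "\<lambda>x. x\<^sup>2"] i2 i4 prob_space_axioms unfolding q_def s_def e4
    by simp
  have s0: "s \<ge> 0" unfolding s_def by simp
  have "m\<^sup>2 * s \<le> s * s" using ms s0 by (rule mult_right_mono)
  also have "\<dots> \<le> q" using sq by (simp add: power2_eq_square)
  finally have "m * (m\<^sup>2 * s) \<le> m * q" using m0 by (simp add: mult_left_mono)
  then have mq: "m^3 * s \<le> m * q" by (simp add: power2_eq_square power3_eq_cube algebra_simps)
  have main: "m^3 * s - 2 * m * q \<le> 3 - s"
  proof (cases "m = 0")
    case True
    have "AE x in \<mu>. \<bar>x\<bar> = 0" using integral_nonneg_eq_0_iff_AE[OF i1] True m_def by simp
    then have "AE x in \<mu>. x\<^sup>2 = 0" by eventually_elim simp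
    then have "s = 0" unfolding s_def by (rule integral_eq_zero_AE)
    then show ?thesis using True by simp
  next
    case False
    then have mp: "m > 0" using m0 by simp
    show ?thesis
    proof (cases "m < 1")
      case True
      have iy: "integrable \<mu> (\<lambda>y. 2/3 * (\<bar>y\<bar>/m) + 1/3 * (m\<^sup>2 * y^4))" using i1 i4 by simp
      have "s \<le> (\<integral>y. 2/3 * (\<bar>y\<bar>/m) + 1/3 * (m\<^sup>2 * y^4) \<partial>\<mu>)"
        unfolding s_def by (rule integral_mono[OF i2 iy]) (rule young[OF mp])
      also have "\<dots> = 2/3 * (m/m) + 1/3 * (m\<^sup>2 * q)" using i1 i4 unfolding m_def q_def by simp
      also have "\<dots> = 2/3 + 1/3 * (m\<^sup>2 * q)" using mp by simp
      finally have s1: "s \<le> 2/3 + 1/3 * (m\<^sup>2 * q)" .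
      have "m\<^sup>2 * q \<le> m * q" using True m0 q0 by (simp add: power2_eq_square mult_right_mono mult_left_le_one_le)
      moreover have "m * q \<ge> 0" using m0 q0 by simp
      ultimately show ?thesis using s1 mq by linarith
    next
      case False
      then have "m * q \<ge> q" using q0 by (simp add: mult_le_cancel_right1)
      then have "m^3 * s - 2 * m * q \<le> - s\<^sup>2" using mq sq by linarith
      moreover have "s\<^sup>2 - s + 3 = (s - 1/2)\<^sup>2 + 11/4" by (simp add: power2_eq_square algebra_simps)
      moreover have "(s - 1/2)\<^sup>2 \<ge> 0" by simp
      ultimately show ?thesis by linarith
    qed
  qed
  show ?thesis unfolding IL IV using main by simp
qed

lemma abs_le_V: "\<bar>y::real\<bar> \<le> 1/2 + y\<^sup>2/2"
proof -
  have "0 \<le> (\<bar>y\<bar> - 1)\<^sup>2" by simp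
  then show ?thesis by (simp add: power2_eq_square algebra_simps)
qed

lemma PRV_m:
  assumes "\<mu> \<in> PRV (\<lambda>x::real. x\<^sup>2 / 2) R"
  shows "integrable \<mu> (\<lambda>y. \<bar>y\<bar>)" "(\<integral>y. \<bar>y\<bar> \<partial>\<mu>) \<ge> 0" "(\<integral>y. \<bar>y\<bar> \<partial>\<mu>) \<le> 1/2 + R"
proof -
  have P: "prob_on_R \<mu>" and iV: "integrable \<mu> (\<lambda>x::real. x\<^sup>2 / 2)" and IR: "(\<integral>x. x\<^sup>2/2 \<partial>\<mu>) \<le> R"
    using assms unfolding PRV_def by auto
  interpret prob_space \<mu> using P unfolding prob_on_R_def by blast
  have ib: "integrable \<mu> (\<lambda>y::real. 1/2 + y\<^sup>2/2)" using iV by simp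
  show i1: "integrable \<mu> (\<lambda>y. \<bar>y\<bar>)"
    by (rule Bochner_Integration.integrable_bound[OF ib]) (auto intro!: meas_R[OF P] continuous_intros simp: abs_le_V)
  show "(\<integral>y. \<bar>y\<bar> \<partial>\<mu>) \<ge> 0" by simp
  have "(\<integral>y. \<bar>y\<bar> \<partial>\<mu>) \<le> (\<integral>y. 1/2 + y\<^sup>2/2 \<partial>\<mu>)"
    by (rule integral_mono[OF i1 ib]) (rule abs_le_V)
  also have "\<dots> = 1/2 + (\<integral>x. x\<^sup>2/2 \<partial>\<mu>)" using iV by (simp add: prob_space)
  finally show "(\<integral>y. \<bar>y\<bar> \<partial>\<mu>) \<le> 1/2 + R" using IR by simp
qed

lemma bdd_D: "bdd_interval K \<Longrightarrow> \<exists>D\<ge>0. \<forall>x\<in>K. \<bar>x::real\<bar> \<le> D"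
proof -
  assume "bdd_interval K"
  then obtain D where "\<forall>x\<in>K. norm x \<le> D" unfolding bdd_interval_def bounded_iff by blast
  then show ?thesis by (intro exI[of _ "max D 0"]) auto
qed

lemma filt_V: "filterlim (\<lambda>x::real. x\<^sup>2 / 2) at_top at_infinity"
proof -
  have "filterlim (\<lambda>t::real. t\<^sup>2 / 2) at_top at_top"
  proof (rule filterlim_at_top_mono[OF filterlim_ident])
    show "\<forall>\<^sub>F x in at_top. x \<le> x\<^sup>2 / (2::real)"
      using eventually_ge_at_top[of "2::real"]
    proof eventually_elim
      case (elim x)
      then have "x * 2 \<le> x * x" by (intro mult_left_mono) auto
      then show ?case by (simp add: power2_eq_square)
    qed
  qed
  from filterlim_compose[OF this filterlim_norm_at_top[where 'a=real]] show ?thesis by (simp add: real_norm_def)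
qed

lemma tends_abs: "((\<lambda>x::real. \<bar>x\<bar> / (x\<^sup>2 / 2)) \<longlongrightarrow> 0) at_infinity"
proof -
  have "((\<lambda>t::real. 2 / t) \<longlongrightarrow> 0) at_top"
    by (rule tendsto_divide_0[OF tendsto_const filterlim_at_top_imp_at_infinity[OF filterlim_ident]])
  from filterlim_compose[OF this filterlim_norm_at_top]
  have "((\<lambda>x::real. 2 / norm x) \<longlongrightarrow> 0) at_infinity" .
  moreover have "(\<lambda>x::real. \<bar>x\<bar> / (x\<^sup>2 / 2)) = (\<lambda>x::real. 2 / norm x)"
  proof
    fix x :: real
    show "\<bar>x\<bar> / (x\<^sup>2 / 2) = 2 / norm x"
    proof (cases "x = 0")
      case False
      have "x\<^sup>2 = \<bar>x\<bar> * \<bar>x\<bar>" by (simp add: power2_eq_square)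
      then show ?thesis using False by (simp add: field_simps)
    qed simp
  qed
  ultimately show ?thesis by simp
qed

lemma C2V: "C2 (\<lambda>x::real. x\<^sup>2 / 2)"
  unfolding C2_def dV ddV by (auto intro!: derivative_intros continuous_intros)

lemma partb: "\<not> (\<exists>U C \<Lambda>. C2 U \<and> (\<forall>x. U x \<ge> 0) \<and> filterlim U at_top at_infinity \<and> C > 0 \<and> \<Lambda> > 0 \<and>
        (\<forall>\<mu>. prob_on_R \<mu> \<and> integrable \<mu> U \<and> integrable \<mu> (\<lambda>y. \<bar>y\<bar>) \<longrightarrow>
           (\<forall>x. Lop ex_a ex_b \<mu> U x \<le> C - \<Lambda> * U x)))"
proof
  assume "\<exists>U C \<Lambda>. C2 U \<and> (\<forall>x. U x \<ge> 0) \<and> filterlim U at_top at_infinity \<and> C > 0 \<and> \<Lambda> > 0 \<and>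
        (\<forall>\<mu>. prob_on_R \<mu> \<and> integrable \<mu> U \<and> integrable \<mu> (\<lambda>y. \<bar>y\<bar>) \<longrightarrow>
           (\<forall>x. Lop ex_a ex_b \<mu> U x \<le> C - \<Lambda> * U x))"
  then obtain U C \<Lambda> where U: "C2 U" "filterlim U at_top at_infinity" "\<Lambda> > 0"
    and H: "\<And>\<mu>. prob_on_R \<mu> \<and> integrable \<mu> U \<and> integrable \<mu> (\<lambda>y. \<bar>y\<bar>) \<Longrightarrow>
           (\<forall>x. Lop ex_a ex_b \<mu> U x \<le> C - \<Lambda> * U x)" by blast
  define \<delta> where "\<delta> = return borel (0::real)"
  have P: "prob_on_R \<delta>" unfolding prob_on_R_def \<delta>_def by (auto intro: prob_space_return)
  interpret prob_space \<delta> using P unfolding prob_on_R_def by blast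
  have AE0: "AE x in \<delta>. \<bar>x\<bar> \<le> 0" unfolding \<delta>_def by (subst AE_return) auto
  have cU: "continuous_on UNIV U" using U(1) unfolding C2_def
    by (meson continuous_at_imp_continuous_on differentiable_imp_continuous_within)
  have "integrable \<delta> U" by (rule int_R[OF P AE0 cU])
  moreover have "integrable \<delta> (\<lambda>y. \<bar>y\<bar>)" by (rule int_R[OF P AE0]) (intro continuous_intros)
  ultimately have H': "\<And>x. Lop ex_a ex_b \<delta> U x \<le> C - \<Lambda> * U x" using H P by blast
  have m0: "(\<integral>y. \<bar>y\<bar> \<partial>\<delta>) = 0" unfolding \<delta>_def by (subst integral_return) auto
  have "\<And>x. U x \<le> C / \<Lambda>"
  proof -
    fix x
    have "0 \<le> C - \<Lambda> * U x" using H'[of x] m0 unfolding Lop_def ex_a_def ex_b_def by simp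
    then show "U x \<le> C / \<Lambda>" using U(3) by (simp add: field_simps)
  qed
  moreover have "eventually (\<lambda>x. U x > C / \<Lambda>) at_infinity"
    using U(2) by (simp add: filterlim_at_top_dense)
  then obtain x where "U x > C / \<Lambda>" using eventually_happens trivial_limit_at_infinity by blast
  ultimately show False by (meson not_le)
qed

lemma a1: "0 \<le> m \<Longrightarrow> m \<le> M \<Longrightarrow> \<bar>x\<bar> \<le> D \<Longrightarrow> \<bar>x\<^sup>2 * m^3\<bar> \<le> D^2 * M^3" for x m M D :: real
proof -
  assume m: "0 \<le> m" "m \<le> M" and xD: "\<bar>x\<bar> \<le> D"
  have "\<bar>x\<^sup>2 * m^3\<bar> = \<bar>x\<bar>^2 * m^3" using m by (simp add: abs_mult)
  also have "\<dots> \<le> D^2 * M^3" using m xD by (intro mult_mono power_mono) auto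
  finally show ?thesis .
qed
lemma a2: "0 \<le> m \<Longrightarrow> m \<le> M \<Longrightarrow> \<bar>x\<bar> \<le> D \<Longrightarrow> \<bar>- 2 * x ^ 3 * m\<bar> \<le> 2 * D^3 * M" for x m M D :: real
proof -
  assume m: "0 \<le> m" "m \<le> M" and xD: "\<bar>x\<bar> \<le> D"
  have "\<bar>- 2 * x ^ 3 * m\<bar> = 2 * \<bar>x\<bar>^3 * m" using m by (simp add: abs_mult power_abs)
  also have "\<dots> \<le> 2 * D^3 * M" using m xD by (intro mult_mono power_mono) auto
  finally show ?thesis .
qed
lemma sq_lip: "\<bar>x\<bar> \<le> D \<Longrightarrow> \<bar>x'\<bar> \<le> D \<Longrightarrow> \<bar>x\<^sup>2 - x'\<^sup>2\<bar> \<le> 2 * D * \<bar>x - x'\<bar>" for x x' D :: real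
proof -
  assume a: "\<bar>x\<bar> \<le> D" "\<bar>x'\<bar> \<le> D"
  have "x\<^sup>2 - x'\<^sup>2 = (x + x') * (x - x')" by (simp add: power2_eq_square algebra_simps)
  then have "\<bar>x\<^sup>2 - x'\<^sup>2\<bar> = \<bar>x + x'\<bar> * \<bar>x - x'\<bar>" by (simp add: abs_mult)
  also have "\<dots> \<le> (2 * D) * \<bar>x - x'\<bar>" using a by (intro mult_right_mono) auto
  finally show ?thesis .
qed

lemma cube_lip: "\<bar>x\<bar> \<le> D \<Longrightarrow> \<bar>x'\<bar> \<le> D \<Longrightarrow> \<bar>x^3 - x'^3\<bar> \<le> 3 * D\<^sup>2 * \<bar>x - x'\<bar>" for x x' D :: real
proof -
  assume a: "\<bar>x\<bar> \<le> D" "\<bar>x'\<bar> \<le> D"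
  have "x^3 - x'^3 = (x*x + x*x' + x'*x') * (x - x')" by (simp add: power3_eq_cube algebra_simps)
  then have "\<bar>x^3 - x'^3\<bar> = \<bar>x*x + x*x' + x'*x'\<bar> * \<bar>x - x'\<bar>" by (simp add: abs_mult)
  also have "\<bar>x*x + x*x' + x'*x'\<bar> \<le> \<bar>x\<bar>*\<bar>x\<bar> + \<bar>x\<bar>*\<bar>x'\<bar> + \<bar>x'\<bar>*\<bar>x'\<bar>"
  proof -
    have "\<bar>x*x + x*x' + x'*x'\<bar> \<le> \<bar>x*x + x*x'\<bar> + \<bar>x'*x'\<bar>" by (rule abs_triangle_ineq)
    also have "\<dots> \<le> \<bar>x*x\<bar> + \<bar>x*x'\<bar> + \<bar>x'*x'\<bar>" by (rule add_right_mono[OF abs_triangle_ineq])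
    finally show ?thesis by (simp only: abs_mult)
  qed
  also have "\<bar>x\<bar>*\<bar>x\<bar> + \<bar>x\<bar>*\<bar>x'\<bar> + \<bar>x'\<bar>*\<bar>x'\<bar> \<le> D*D + D*D + D*D"
    using a by (intro add_mono mult_mono) auto
  finally show ?thesis by (simp add: power2_eq_square mult_right_mono)
qed
lemma a3: "0 \<le> m \<Longrightarrow> m \<le> M \<Longrightarrow> \<bar>x\<bar> \<le> D \<Longrightarrow> \<bar>x'\<bar> \<le> D \<Longrightarrow>
   \<bar>x\<^sup>2 * m^3 - x'\<^sup>2 * m^3\<bar> + \<bar>- 2 * x ^ 3 * m - (- 2 * x' ^ 3 * m)\<bar>
   \<le> (2 * D * M^3 + 6 * D\<^sup>2 * M) * \<bar>x - x'\<bar>" for x x' m M D :: real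
proof -
  assume m: "0 \<le> m" "m \<le> M" and xD: "\<bar>x\<bar> \<le> D" "\<bar>x'\<bar> \<le> D"
  have D0: "0 \<le> D" using xD(1) by simp
  have "x\<^sup>2 * m^3 - x'\<^sup>2 * m^3 = (x\<^sup>2 - x'\<^sup>2) * m^3" by (simp add: algebra_simps)
  then have "\<bar>x\<^sup>2 * m^3 - x'\<^sup>2 * m^3\<bar> = \<bar>x\<^sup>2 - x'\<^sup>2\<bar> * m^3"
    using m by (simp add: abs_mult)
  also have "\<dots> \<le> (2 * D * \<bar>x - x'\<bar>) * M^3" using m D0 sq_lip[OF xD]
    by (intro mult_mono power_mono) auto
  finally have 1: "\<bar>x\<^sup>2 * m^3 - x'\<^sup>2 * m^3\<bar> \<le> (2 * D * \<bar>x - x'\<bar>) * M^3" .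
  have "- 2 * x ^ 3 * m - (- 2 * x' ^ 3 * m) = -2 * m * (x^3 - x'^3)" by (simp add: algebra_simps)
  then have "\<bar>- 2 * x ^ 3 * m - (- 2 * x' ^ 3 * m)\<bar> = 2 * m * \<bar>x^3 - x'^3\<bar>"
    using m by (simp add: abs_mult)
  also have "\<dots> \<le> 2 * M * (3 * D\<^sup>2 * \<bar>x - x'\<bar>)" using m cube_lip[OF xD]
    by (intro mult_mono) auto
  finally have 2: "\<bar>- 2 * x ^ 3 * m - (- 2 * x' ^ 3 * m)\<bar> \<le> 2 * M * (3 * D\<^sup>2 * \<bar>x - x'\<bar>)" .
  have "(2 * D * \<bar>x - x'\<bar>) * M^3 + 2 * M * (3 * D\<^sup>2 * \<bar>x - x'\<bar>) = (2 * D * M^3 + 6 * D\<^sup>2 * M) * \<bar>x - x'\<bar>"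
    by (simp add: algebra_simps)
  with 1 2 show ?thesis by linarith
qed

lemma h12: "H1_2 ex_a ex_b (\<lambda>x::real. x\<^sup>2 / 2)"
  unfolding H1_2_def
proof (intro allI impI)
  fix R :: real and K assume "R > 0" and bK: "bdd_interval K"
  obtain D where D: "D \<ge> 0" "\<forall>x\<in>K. \<bar>x\<bar> \<le> D" using bdd_D[OF bK] by auto
  define M where "M = 1/2 + R"
  show "\<exists>B. \<forall>x\<in>K. \<forall>\<mu>\<in>PRV (\<lambda>x. x\<^sup>2 / 2) R. \<bar>ex_a x \<mu>\<bar> + \<bar>ex_b x \<mu>\<bar> \<le> B"
  proof (intro exI ballI)
    fix x \<mu> assume x: "x \<in> K" and mu: "\<mu> \<in> PRV (\<lambda>x. x\<^sup>2 / 2) R"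
    define m where "m = (\<integral>y. \<bar>y\<bar> \<partial>\<mu>)"
    have m: "0 \<le> m" "m \<le> M" using PRV_m[OF mu] unfolding m_def M_def by auto
    have xD: "\<bar>x\<bar> \<le> D" using D x by auto
    have "\<bar>x\<^sup>2 * m^3\<bar> + \<bar>- 2 * x ^ 3 * m\<bar> \<le> D^2 * M^3 + 2 * D^3 * M"
      by (rule add_mono[OF a1[OF m xD] a2[OF m xD]])
    then show "\<bar>ex_a x \<mu>\<bar> + \<bar>ex_b x \<mu>\<bar> \<le> D^2 * M^3 + 2 * D^3 * M"
      unfolding ex_a_def ex_b_def m_def .
  qed
qed

lemma h13: "H1_3 ex_a ex_b (\<lambda>x::real. x\<^sup>2 / 2)"
  unfolding H1_3_def
proof (intro allI impI)
  fix R :: real and K assume R: "R > 0" and bK: "bdd_interval K"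
  obtain D where D: "D \<ge> 0" "\<forall>x\<in>K. \<bar>x\<bar> \<le> D" using bdd_D[OF bK] by auto
  define M where "M = 1/2 + R"
  have M0: "M \<ge> 0" using R by (simp add: M_def)
  define L where "L = 2 * D * M^3 + 6 * D\<^sup>2 * M"
  have L0: "L \<ge> 0" using D M0 by (simp add: L_def)
  have mod: "modulus (\<lambda>t. L * t)" unfolding modulus_def using L0
    by (auto intro!: continuous_intros mono_onI mult_left_mono)
  show "\<exists>\<omega>. modulus \<omega> \<and> (\<forall>x\<in>K. \<forall>x'\<in>K. \<forall>\<mu>\<in>PRV (\<lambda>x. x\<^sup>2 / 2) R.
        \<bar>ex_a x \<mu> - ex_a x' \<mu>\<bar> + \<bar>ex_b x \<mu> - ex_b x' \<mu>\<bar> \<le> \<omega> \<bar>x - x'\<bar>)"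
  proof (intro exI conjI ballI)
    show "modulus (\<lambda>t. L * t)" by (rule mod)
    fix x x' \<mu> assume x: "x \<in> K" "x' \<in> K" and mu: "\<mu> \<in> PRV (\<lambda>x. x\<^sup>2 / 2) R"
    define m where "m = (\<integral>y. \<bar>y\<bar> \<partial>\<mu>)"
    have m: "0 \<le> m" "m \<le> M" using PRV_m[OF mu] unfolding m_def M_def by auto
    have xD: "\<bar>x\<bar> \<le> D" "\<bar>x'\<bar> \<le> D" using D x by auto
    from a3[OF m xD]
    show "\<bar>ex_a x \<mu> - ex_a x' \<mu>\<bar> + \<bar>ex_b x \<mu> - ex_b x' \<mu>\<bar> \<le> L * \<bar>x - x'\<bar>"
      unfolding ex_a_def ex_b_def m_def L_def .
  qed
qed

lemma h2: "H2 ex_a ex_b (\<lambda>x::real. x\<^sup>2 / 2)"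
  unfolding H2_def
proof (intro allI impI)
  fix R :: real and \<mu>s \<mu> x
  assume "R > 0" and A: "(\<forall>n. \<mu>s n \<in> PRV (\<lambda>x. x\<^sup>2 / 2) R) \<and> \<mu> \<in> PRV (\<lambda>x. x\<^sup>2 / 2) R \<and> V_weak_conv (\<lambda>x. x\<^sup>2 / 2) \<mu>s \<mu>"
  have c: "(\<lambda>n. \<integral>y. \<bar>y\<bar> \<partial>\<mu>s n) \<longlonglongrightarrow> (\<integral>y. \<bar>y\<bar> \<partial>\<mu>)"
    using A tends_abs unfolding V_weak_conv_def by (auto intro!: continuous_intros)
  have "(\<lambda>n. \<bar>ex_a x (\<mu>s n) - ex_a x \<mu>\<bar> + \<bar>ex_b x (\<mu>s n) - ex_b x \<mu>\<bar>) \<longlonglongrightarrow>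
     \<bar>ex_a x \<mu> - ex_a x \<mu>\<bar> + \<bar>ex_b x \<mu> - ex_b x \<mu>\<bar>"
    unfolding ex_a_def ex_b_def by (intro tendsto_intros c)
  then show "(\<lambda>n. \<bar>ex_a x (\<mu>s n) - ex_a x \<mu>\<bar> + \<bar>ex_b x (\<mu>s n) - ex_b x \<mu>\<bar>) \<longlonglongrightarrow> 0" by simp
qed

theorem mainTheorem10:
  defines "V \<equiv> (\<lambda>x::real. x\<^sup>2 / 2)"
    and "H \<equiv> (\<lambda>x::real. 0::real)"
  shows
   "(C2 V \<and> (\<forall>x. V x \<ge> 0) \<and> filterlim V at_top at_infinity
     \<and> H1_2 ex_a ex_b V \<and> H1_3 ex_a ex_b V \<and> H2 ex_a ex_b V
     \<and> continuous_on UNIV H \<and> (\<forall>x. H x \<ge> 0) \<and> ((\<lambda>x. H x / V x) \<longlongrightarrow> 0) at_infinity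
     \<and> (\<forall>c1 c2::real. c1 > 0 \<and> c2 > 0 \<longrightarrow> (\<forall>\<mu>\<in>PV V.
          \<bar>ex_a 0 \<mu>\<bar> + \<bar>ex_b 0 \<mu>\<bar> \<le> c1 + c2 * integral\<^sup>L \<mu> H))
     \<and> (\<exists>C \<Lambda>::real. C > 0 \<and> \<Lambda> > 0 \<and> (\<forall>\<mu>. prob_on_R \<mu> \<and> compact_supp \<mu> \<longrightarrow>
          (\<integral>x. Lop ex_a ex_b \<mu> V x \<partial>\<mu>) \<le> C - \<Lambda> * integral\<^sup>L \<mu> V))
     \<and> (\<forall>\<mu>. prob_on_R \<mu> \<and> compact_supp \<mu> \<longrightarrow>
          (\<integral>x. Lop ex_a ex_b \<mu> V x \<partial>\<mu>) \<le> 3 - 2 * integral\<^sup>L \<mu> V))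
  \<and> \<not> (\<exists>U C \<Lambda>. C2 U \<and> (\<forall>x. U x \<ge> 0) \<and> filterlim U at_top at_infinity \<and> C > 0 \<and> \<Lambda> > 0 \<and>
        (\<forall>\<mu>. prob_on_R \<mu> \<and> integrable \<mu> U \<and> integrable \<mu> (\<lambda>y. \<bar>y\<bar>) \<longrightarrow>
           (\<forall>x. Lop ex_a ex_b \<mu> U x \<le> C - \<Lambda> * U x)))"
proof -
  have K: "\<forall>\<mu>. prob_on_R \<mu> \<and> compact_supp \<mu> \<longrightarrow>
          (\<integral>x. Lop ex_a ex_b \<mu> V x \<partial>\<mu>) \<le> 3 - 2 * integral\<^sup>L \<mu> V"
    unfolding V_def using key by blast
  have E: "\<exists>C \<Lambda>::real. C > 0 \<and> \<Lambda> > 0 \<and> (\<forall>\<mu>. prob_on_R \<mu> \<and> compact_supp \<mu> \<longrightarrow>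
          (\<integral>x. Lop ex_a ex_b \<mu> V x \<partial>\<mu>) \<le> C - \<Lambda> * integral\<^sup>L \<mu> V)"
    by (rule exI[of _ 3], rule exI[of _ 2]) (use K in simp)
  have Z: "\<forall>c1 c2::real. c1 > 0 \<and> c2 > 0 \<longrightarrow> (\<forall>\<mu>\<in>PV V.
          \<bar>ex_a 0 \<mu>\<bar> + \<bar>ex_b 0 \<mu>\<bar> \<le> c1 + c2 * integral\<^sup>L \<mu> H)"
    unfolding H_def ex_a_def ex_b_def by simp
  have a1: "C2 V" "\<forall>x. V x \<ge> 0" "filterlim V at_top at_infinity"
    "H1_2 ex_a ex_b V" "H1_3 ex_a ex_b V" "H2 ex_a ex_b V"
    unfolding V_def using C2V filt_V h12 h13 h2 by auto
  have a2: "continuous_on UNIV H" "\<forall>x. H x \<ge> 0" "((\<lambda>x. H x / V x) \<longlongrightarrow> 0) at_infinity"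
    unfolding H_def by auto
  show ?thesis
    using a1 a2 K E Z partb by blast
qed

end
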